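(* Let $T$ be a valid set such that there is a unique pair $(\alpha',\beta')\in T$ with $\gamma_{\alpha',\beta'}=\Gamma_T$. Then $n^{-1}|\mathcal{E}_T(\{(\alpha',\beta')\})\cap[n]|\to1$ as $n\to\infty$; that is, almost every $n$ has $\mathcal{S}_T(n)=\{(\alpha',\beta')\}$.
   Context: For relatively prime positive integers $\alpha,\beta$ and positive integers $a_1,a_2$, the $(\alpha,\beta)$-walk $w^{\alpha,\beta}_k(a_1,a_2)$ is given by $w_1=a_1$, $w_2=a_2$, $w_{k+2}=\alpha w_{k+1}+\beta w_k$ ($k\ge1$). For a positive integer $n$, $s^{\alpha,\beta}(n;a_1,a_2)$ is the (largest) index $s$ with $w^{\alpha,\beta}_s(a_1,a_2)=n$ ($-\infty$ if none), and $s^{\alpha,\beta}(n)=\max_{a_1,a_2\ge1}s^{\alpha,\beta}(n;a_1,a_2)$. $\gamma_{\alpha,\beta}=\frac12(\alpha+\sqrt{\alpha^2+4\beta})$. A set $T$ is valid if $T\subseteq\{(\alpha,\beta):\alpha,\beta\ge1,\gcd(\alpha,\beta)=1\}$. For valid $T$: $\bar s_T(n)=\max_{(\alpha,\beta)\in T}s^{\alpha,\beta}(n)$, $\mathcal{S}_T(n)=\{(\alpha,\beta)\in T:s^{\alpha,\beta}(n)=\bar s_T(n)\}$, $\Gamma_T=\min\{\gamma_{\alpha,\beta}:(\alpha,\beta)\in T\}$, and for a set $S$ of pairs $\mathcal{E}_T(S)=\{n\ge1:S=\mathcal{S}_T(n)\}$. $[n]=\{1,\dots,n\}$. *)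

theory Defs
  imports "HOL-Analysis.Analysis"
begin

fun wseq :: "nat \<Rightarrow> nat \<Rightarrow> nat \<Rightarrow> nat \<Rightarrow> nat \<Rightarrow> nat" where
  "wseq \<alpha> \<beta> a1 a2 0 = a1"
| "wseq \<alpha> \<beta> a1 a2 (Suc 0) = a2"
| "wseq \<alpha> \<beta> a1 a2 (Suc (Suc k)) = \<alpha> * wseq \<alpha> \<beta> a1 a2 (Suc k) + \<beta> * wseq \<alpha> \<beta> a1 a2 k"

text \<open>The (alpha,beta)-walk, indexed from 1: walk alpha beta a1 a2 k = w_k.\<close>
definition walk :: "nat \<Rightarrow> nat \<Rightarrow> nat \<Rightarrow> nat \<Rightarrow> nat \<Rightarrow> nat" where
  "walk \<alpha> \<beta> a1 a2 k = wseq \<alpha> \<beta> a1 a2 (k - 1)"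

text \<open>s^{alpha,beta}(n;a1,a2): largest index s \<ge> 1 with w_s = n; None stands for -infinity.\<close>
definition s_walk :: "nat \<Rightarrow> nat \<Rightarrow> nat \<Rightarrow> nat \<Rightarrow> nat \<Rightarrow> nat option" where
  "s_walk \<alpha> \<beta> n a1 a2 =
     (if \<exists>s\<ge>1. walk \<alpha> \<beta> a1 a2 s = n
      then Some (Max {s. s \<ge> 1 \<and> walk \<alpha> \<beta> a1 a2 s = n}) else None)"

text \<open>s^{alpha,beta}(n) = max over a1,a2 \<ge> 1 (for n \<ge> 1 this set is nonempty: a2 = n gives index 2).\<close>
definition s_max :: "nat \<Rightarrow> nat \<Rightarrow> nat \<Rightarrow> nat" where
  "s_max \<alpha> \<beta> n = Max {s. \<exists>a1 a2. a1 \<ge> 1 \<and> a2 \<ge> 1 \<and> s_walk \<alpha> \<beta> n a1 a2 = Some s}"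

definition gamma :: "nat \<Rightarrow> nat \<Rightarrow> real" where
  "gamma \<alpha> \<beta> = (real \<alpha> + sqrt (real \<alpha> ^ 2 + 4 * real \<beta>)) / 2"

definition valid :: "(nat \<times> nat) set \<Rightarrow> bool" where
  "valid T \<longleftrightarrow> (\<forall>(\<alpha>, \<beta>) \<in> T. \<alpha> \<ge> 1 \<and> \<beta> \<ge> 1 \<and> coprime \<alpha> \<beta>)"

definition sbar :: "(nat \<times> nat) set \<Rightarrow> nat \<Rightarrow> nat" where
  "sbar T n = Max ((\<lambda>(\<alpha>, \<beta>). s_max \<alpha> \<beta> n) ` T)"

definition Sset :: "(nat \<times> nat) set \<Rightarrow> nat \<Rightarrow> (nat \<times> nat) set" where
  "Sset T n = {(\<alpha>, \<beta>) \<in> T. s_max \<alpha> \<beta> n = sbar T n}"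

definition Gamma :: "(nat \<times> nat) set \<Rightarrow> real" where
  "Gamma T = Inf ((\<lambda>(\<alpha>, \<beta>). gamma \<alpha> \<beta>) ` T)"

definition Eset :: "(nat \<times> nat) set \<Rightarrow> (nat \<times> nat) set \<Rightarrow> nat set" where
  "Eset T S = {n. n \<ge> 1 \<and> S = Sset T n}"

end

theory Submission
  imports Defs
begin

definition uu :: "nat \<Rightarrow> nat \<Rightarrow> nat \<Rightarrow> nat" where "uu a b k = wseq a b 0 1 k"

lemma uu_simps [simp]: "uu a b 0 = 0" "uu a b (Suc 0) = 1"
  "uu a b (Suc (Suc k)) = a * uu a b (Suc k) + b * uu a b k"
  by (simp_all add: uu_def)

lemma wseq_uu: "wseq a b x y (Suc k) = b * uu a b k * x + uu a b (Suc k) * y"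
proof (induction k rule: induct_nat_012)
  case (ge2 n)
  have "wseq a b x y (Suc (Suc (Suc n))) = a * wseq a b x y (Suc (Suc n)) + b * wseq a b x y (Suc n)"
    by simp
  also have "\<dots> = b * uu a b (Suc (Suc n)) * x + uu a b (Suc (Suc (Suc n))) * y"
    by (simp only: ge2) (simp add: algebra_simps)
  finally show ?case .
qed simp_all

lemma wseq_shift_aux: "wseq a b x y (j + m) = wseq a b (wseq a b x y j) (wseq a b x y (Suc j)) m \<and>
  wseq a b x y (j + Suc m) = wseq a b (wseq a b x y j) (wseq a b x y (Suc j)) (Suc m)"
  by (induction m) simp_all

lemma wseq_shift: "wseq a b x y (j + m) = wseq a b (wseq a b x y j) (wseq a b x y (Suc j)) m"
  using wseq_shift_aux by blast

lemma wseq_ge_aux: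
  assumes "a \<ge> 1" "b \<ge> 1" "x \<ge> 1" "y \<ge> 1"
  shows "max 1 k \<le> wseq a b x y k \<and> max 1 (Suc k) \<le> wseq a b x y (Suc k)"
proof (induction k)
  case 0 then show ?case using assms by simp
next
  case (Suc k)
  have m1: "wseq a b x y (Suc k) \<le> a * wseq a b x y (Suc k)" using assms by simp
  have m2: "wseq a b x y k \<le> b * wseq a b x y k" using assms by simp
  have e: "wseq a b x y (Suc (Suc k)) = a * wseq a b x y (Suc k) + b * wseq a b x y k" by simp have "1 \<le> wseq a b x y k" "k \<le> wseq a b x y k" "Suc k \<le> wseq a b x y (Suc k)"
    using Suc by auto
  have "Suc (Suc k) \<le> wseq a b x y (Suc (Suc k))" 
    using m1 m2 e Suc by (auto simp only: max_def split: if_splits)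
  then show ?case using Suc by simp
qed

lemma wseq_ge:
  assumes "a \<ge> 1" "b \<ge> 1" "x \<ge> 1" "y \<ge> 1"
  shows "k \<le> wseq a b x y k" "1 \<le> wseq a b x y k"
  using wseq_ge_aux[OF assms, of k] by auto

lemma coprime_uu_aux:
  assumes "coprime a b"
  shows "coprime (uu a b k) (uu a b (Suc k)) \<and> coprime b (uu a b (Suc k))"
proof (induction k)
  case 0 then show ?case by simp
next
  case (Suc k)
  have c1: "coprime (uu a b (Suc k)) (b * uu a b k)"
    using Suc by (simp add: coprime_commute)
  have "coprime (uu a b (Suc k)) (a * uu a b (Suc k) + b * uu a b k)"
    using c1 by (simp add: coprime_iff_gcd_eq_1 gcd_add_mult)
  moreover have "coprime b (a * uu a b (Suc k) + b * uu a b k)"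
  proof -
    have "coprime b (a * uu a b (Suc k))" using Suc assms by (simp add: coprime_commute)
    then show ?thesis
      by (metis coprime_iff_gcd_eq_1 gcd.commute gcd_add_mult add.commute mult.commute)
  qed
  ultimately show ?case by simp
qed

lemma coprime_uu:
  assumes "coprime a b"
  shows "coprime (b * uu a b k) (uu a b (Suc k))"
  using coprime_uu_aux[OF assms, of k] by (simp add: coprime_commute)

lemma frobenius:
  fixes A B n :: nat
  assumes "coprime A B" "A \<ge> 1" "B \<ge> 1" "n > A * B"
  shows "\<exists>x y. x \<ge> 1 \<and> y \<ge> 1 \<and> n = A * x + B * y"
proof -
  obtain s t where st: "B * s = A * t + gcd B A" using bezout_nat[of B A] assms(3) by auto
  have "gcd B A = 1" using assms(1) by (simp add: coprime_commute)
  with st have "B * (s * n) = A * (t * n) + n" by (metis add_mult_distrib mult.assoc mult_1)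
  then have y0: "(B * (s * n)) mod A = n mod A" by simp
  define y0 where "y0 = s * n"
  define y where "y = (if y0 mod A = 0 then A else y0 mod A)"
  have y1: "1 \<le> y" and y2: "y \<le> A" using assms(2) by (auto simp: y_def)
  have "y mod A = y0 mod A" by (auto simp: y_def)
  then have "(B * y) mod A = (B * y0) mod A" by (metis mod_mult_right_eq)
  then have c: "(B * y) mod A = n mod A" using y0 y0_def by simp
  have le: "B * y \<le> A * B" using y2 by (simp add: mult.commute)
  then have lt: "B * y < n" using assms(4) by linarith
  have "A dvd n - B * y" using c lt
    by (metis less_or_eq_imp_le mod_eq_dvd_iff_nat)
  then obtain x where x: "n - B * y = A * x" by blast
  have "x \<ge> 1" using x lt by (cases x) auto
  moreover have "n = A * x + B * y" using x lt by linarith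
  ultimately show ?thesis using y1 by blast
qed

definition SW :: "nat \<Rightarrow> nat \<Rightarrow> nat \<Rightarrow> nat \<Rightarrow> nat \<Rightarrow> nat set" where
  "SW a b n x y = {s. s \<ge> 1 \<and> walk a b x y s = n}"

definition SM :: "nat \<Rightarrow> nat \<Rightarrow> nat \<Rightarrow> nat set" where
  "SM a b n = {s. \<exists>x y. x \<ge> 1 \<and> y \<ge> 1 \<and> s_walk a b n x y = Some s}"

lemma SW_bound:
  assumes "a \<ge> 1" "b \<ge> 1" "x \<ge> 1" "y \<ge> 1" "s \<in> SW a b n x y"
  shows "s \<le> n + 1"
proof -
  have "s - 1 \<le> wseq a b x y (s - 1)" using wseq_ge(1)[OF assms(1-4)] by blast
  then show ?thesis using assms(5) by (auto simp: SW_def walk_def)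
qed

lemma SW_finite:
  assumes "a \<ge> 1" "b \<ge> 1" "x \<ge> 1" "y \<ge> 1"
  shows "finite (SW a b n x y)"
  using SW_bound[OF assms] by (meson finite_atMost atMost_iff finite_subset subsetI)

lemma s_walk_Some:
  assumes "a \<ge> 1" "b \<ge> 1" "x \<ge> 1" "y \<ge> 1" "s_walk a b n x y = Some t"
  shows "t \<ge> 1 \<and> walk a b x y t = n"
proof -
  have ne: "SW a b n x y \<noteq> {}" and tt: "t = Max (SW a b n x y)"
    using assms(5) by (auto simp: s_walk_def SW_def split: if_splits)
  have "t \<in> SW a b n x y" using Max_in[OF SW_finite[OF assms(1-4)] ne] tt by simp
  then show ?thesis by (simp add: SW_def)
qed

lemma s_walk_ge:
  assumes "a \<ge> 1" "b \<ge> 1" "x \<ge> 1" "y \<ge> 1" "s \<ge> 1" "walk a b x y s = n"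
  shows "\<exists>t. s_walk a b n x y = Some t \<and> s \<le> t"
proof -
  have sin: "s \<in> SW a b n x y" using assms(5,6) by (simp add: SW_def)
  have "s_walk a b n x y = Some (Max (SW a b n x y))"
    using assms(5,6) by (auto simp: s_walk_def SW_def)
  moreover have "s \<le> Max (SW a b n x y)" using Max_ge[OF SW_finite[OF assms(1-4)] sin] .
  ultimately show ?thesis by blast
qed

lemma SM_bound:
  assumes "a \<ge> 1" "b \<ge> 1" "t \<in> SM a b n"
  shows "t \<le> n + 1"
proof -
  obtain x y where xy: "x \<ge> 1" "y \<ge> 1" "s_walk a b n x y = Some t" using assms(3) by (auto simp: SM_def)
  then have "t \<in> SW a b n x y" using s_walk_Some[OF assms(1,2) xy] by (simp add: SW_def)
  then show ?thesis using SW_bound[OF assms(1,2) xy(1,2)] by blast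
qed

lemma SM_finite:
  assumes "a \<ge> 1" "b \<ge> 1"
  shows "finite (SM a b n)"
  using SM_bound[OF assms] by (meson finite_atMost atMost_iff finite_subset subsetI)

lemma SM_ne:
  assumes "a \<ge> 1" "b \<ge> 1" "n \<ge> 1"
  shows "SM a b n \<noteq> {}"
proof -
  have "walk a b 1 n 2 = n" by (simp add: walk_def)
  then obtain t where "s_walk a b n 1 n = Some t" using s_walk_ge[OF assms(1,2) _ assms(3), of 1 2] by auto
  then show ?thesis using assms(3) unfolding SM_def by blast
qed

lemma s_max_props:
  assumes "a \<ge> 1" "b \<ge> 1" "n \<ge> 1"
  shows "s_max a b n \<in> SM a b n" "\<And>t. t \<in> SM a b n \<Longrightarrow> t \<le> s_max a b n" "s_max a b n \<le> n + 1"
proof -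
  have sm: "s_max a b n = Max (SM a b n)" by (simp add: s_max_def SM_def)
  show 1: "s_max a b n \<in> SM a b n" using Max_in[OF SM_finite[OF assms(1,2)] SM_ne[OF assms]] sm by simp
  show "\<And>t. t \<in> SM a b n \<Longrightarrow> t \<le> s_max a b n" using Max_ge[OF SM_finite[OF assms(1,2)]] sm by simp
  show "s_max a b n \<le> n + 1" using SM_bound[OF assms(1,2) 1] .
qed

lemma s_max_upper:
  assumes "a \<ge> 1" "b \<ge> 1" "n \<ge> 1" "m \<ge> 1" "s_max a b n \<ge> m"
  shows "\<exists>x y. x \<ge> 1 \<and> y \<ge> 1 \<and> wseq a b x y (m - 1) = n"
proof -
  obtain x y where xy: "x \<ge> 1" "y \<ge> 1" "s_walk a b n x y = Some (s_max a b n)"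
    using s_max_props(1)[OF assms(1-3)] by (auto simp: SM_def)
  define t where "t = s_max a b n"
  have w: "wseq a b x y (t - 1) = n" using s_walk_Some[OF assms(1,2) xy] by (simp add: walk_def t_def)
  have "t - 1 = (t - m) + (m - 1)" using assms(4,5) t_def by simp
  then have "wseq a b (wseq a b x y (t - m)) (wseq a b x y (Suc (t - m))) (m - 1) = n"
    using w wseq_shift by metis
  moreover have "wseq a b x y (t - m) \<ge> 1" "wseq a b x y (Suc (t - m)) \<ge> 1"
    using wseq_ge(2)[OF assms(1,2) xy(1,2)] by auto
  ultimately show ?thesis by blast
qed

lemma s_max_lower:
  assumes "a \<ge> 1" "b \<ge> 1" "n \<ge> 1" "m \<ge> 1" "x \<ge> 1" "y \<ge> 1" "wseq a b x y (m - 1) = n"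
  shows "s_max a b n \<ge> m"
proof -
  have "walk a b x y m = n" using assms(7) by (simp add: walk_def)
  then obtain t where t: "s_walk a b n x y = Some t" "m \<le> t"
    using s_walk_ge[OF assms(1,2,5,6,4)] by blast
  then have "t \<in> SM a b n" using assms(5,6) by (auto simp: SM_def)
  then show ?thesis using s_max_props(2)[OF assms(1-3)] t(2) by fastforce
qed

lemma gamma_props:
  assumes "a \<ge> 1" "b \<ge> 1"
  shows "real a \<le> gamma a b" "gamma a b > 1" "(gamma a b)^2 = real a * gamma a b + real b"
    "real b \<le> (gamma a b)^2"
proof -
  define r where "r = sqrt (real a ^ 2 + 4 * real b)"
  have r2: "r^2 = real a ^ 2 + 4 * real b" unfolding r_def by simp
  have ra: "r > real a" unfolding r_def using assms by (simp add: real_less_rsqrt)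
  have g: "gamma a b = (real a + r) / 2" by (simp add: gamma_def r_def)
  show 1: "real a \<le> gamma a b" using ra g by simp
  show "gamma a b > 1" using ra g assms by simp
  show e: "(gamma a b)^2 = real a * gamma a b + real b" unfolding g using r2
    by (simp add: power2_eq_square field_simps) 
  show "real b \<le> (gamma a b)^2" using e 1 assms by simp
qed

lemma uu_upper:
  assumes "a \<ge> 1" "b \<ge> 1"
  shows "real (uu a b k) \<le> (gamma a b)^k"
proof -
  let ?g = "gamma a b"
  have g1: "?g > 1" using gamma_props[OF assms] by simp
  have "real (uu a b k) \<le> ?g^k \<and> real (uu a b (Suc k)) \<le> ?g^(Suc k)"
  proof (induction k)
    case 0 then show ?case using g1 by simp
  next
    case (Suc k)
    have "real (uu a b (Suc (Suc k))) = real a * real (uu a b (Suc k)) + real b * real (uu a b k)" by simp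
    also have "\<dots> \<le> real a * ?g^(Suc k) + real b * ?g^k"
      using Suc by (intro add_mono mult_left_mono) auto
    also have "\<dots> = ?g^k * (real a * ?g + real b)" by (simp add: algebra_simps)
    also have "\<dots> = ?g^(Suc (Suc k))" using gamma_props(3)[OF assms] by (simp add: power2_eq_square)
    finally show ?case using Suc by simp
  qed
  then show ?thesis by simp
qed

lemma uu_lower:
  assumes "a \<ge> 1" "b \<ge> 1"
  shows "real a * (gamma a b)^k \<le> gamma a b * real (uu a b (Suc k))"
proof -
  let ?g = "gamma a b"
  have ga: "real a \<le> ?g" using gamma_props[OF assms] by simp
  have "real a * ?g^k \<le> ?g * real (uu a b (Suc k)) \<and> real a * ?g^(Suc k) \<le> ?g * real (uu a b (Suc (Suc k)))"
  proof (induction k)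
    case 0 then show ?case using ga by simp
  next
    case (Suc k)
    have "?g^(Suc (Suc k)) = ?g^k * ?g^2" by (simp add: power2_eq_square algebra_simps)
    also have "\<dots> = ?g^k * (real a * ?g + real b)" using gamma_props(3)[OF assms] by simp
    finally have "real a * ?g^(Suc (Suc k)) = real a * ?g^k * (real a * ?g + real b)" by simp
    also have "\<dots> = real a * (real a * ?g^(Suc k)) + real b * (real a * ?g^k)" by (simp add: algebra_simps)
    also have "\<dots> \<le> real a * (?g * real (uu a b (Suc (Suc k)))) + real b * (?g * real (uu a b (Suc k)))"
      using Suc by (intro add_mono mult_left_mono) auto
    also have "\<dots> = ?g * real (uu a b (Suc (Suc (Suc k))))" by (simp add: algebra_simps)
    finally show ?case using Suc by simp
  qed
  then show ?thesis by simp
qed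

lemma uu_pos:
  assumes "a \<ge> 1" "b \<ge> 1"
  shows "uu a b (Suc k) \<ge> 1"
proof -
  have "0 < real a * (gamma a b)^k" using assms gamma_props(2)[OF assms] by simp
  then have "0 < gamma a b * real (uu a b (Suc k))" using uu_lower[OF assms, of k] by linarith
  then show ?thesis using gamma_props(2)[OF assms] by (simp add: zero_less_mult_iff)
qed

lemma uu_lower':
  assumes "a \<ge> 1" "b \<ge> 1"
  shows "(gamma a b)^k \<le> gamma a b * real (uu a b (Suc k))"
proof -
  have "(gamma a b)^k \<le> real a * (gamma a b)^k" using assms gamma_props(2)[OF assms] by simp
  then show ?thesis using uu_lower[OF assms, of k] by linarith
qed

lemma lower_p:
  assumes "a \<ge> 1" "b \<ge> 1" "coprime a b" "k \<ge> 1" "real n > real b * (gamma a b)^(2*k+1)"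
  shows "s_max a b n \<ge> k + 2"
proof -
  let ?g = "gamma a b"
  define A where "A = b * uu a b k"
  define B where "B = uu a b (Suc k)"
  obtain j where kj: "k = Suc j" using assms(4) by (cases k) auto
  have A1: "A \<ge> 1" using uu_pos[OF assms(1,2), of j] assms(2) kj by (simp add: A_def)
  have B1: "B \<ge> 1" using uu_pos[OF assms(1,2), of k] by (simp add: B_def)
  have cop: "coprime A B" using coprime_uu[OF assms(3)] by (simp add: A_def B_def)
  have g0: "?g > 0" using gamma_props(2)[OF assms(1,2)] by simp
  have "real (A * B) = real b * real (uu a b k) * real (uu a b (Suc k))" by (simp add: A_def B_def)
  also have "\<dots> \<le> real b * ?g^k * ?g^(Suc k)"
  proof -
    have "real (uu a b k) \<le> ?g^k" by (rule uu_upper[OF assms(1,2)])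
    moreover have "real (uu a b (Suc k)) \<le> ?g^(Suc k)" by (rule uu_upper[OF assms(1,2)])
    ultimately show ?thesis using g0 assms(2) by (intro mult_mono) auto
  qed
  also have "\<dots> = real b * ?g^(2*k+1)" by (simp add: power_add[symmetric] mult_2)
  finally have "A * B < n" using assms(5) by linarith
  then obtain x y where xy: "x \<ge> 1" "y \<ge> 1" "n = A * x + B * y" using frobenius[OF cop A1 B1] by blast
  have "wseq a b x y (k + 2 - 1) = n" using xy(3) by (simp add: wseq_uu A_def B_def)
  moreover have "n \<ge> 1" using xy A1 by (simp add: add_increasing2)
  ultimately show ?thesis using s_max_lower[OF assms(1,2) _ _ xy(1,2)] by simp
qed

lemma det_q:
  assumes "a \<ge> 1" "b \<ge> 1" "n \<ge> 1" "s_max a b n \<ge> k + 2"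
  shows "(gamma a b)^k \<le> gamma a b * real n"
proof -
  obtain x y where xy: "x \<ge> 1" "y \<ge> 1" "wseq a b x y (k + 2 - 1) = n"
    using s_max_upper[OF assms(1-3) _ assms(4)] by auto
  then have "n = b * uu a b k * x + uu a b (Suc k) * y" by (simp add: wseq_uu)
  then have "uu a b (Suc k) \<le> n" using xy(2)
    by (metis le_add2 le_trans mult_le_mono2 mult.right_neutral)
  then have "real (uu a b (Suc k)) \<le> real n" by simp
  then show ?thesis using uu_lower'[OF assms(1,2), of k] gamma_props(2)[OF assms(1,2)]
    by (smt (verit) mult_left_mono)
qed

lemma count_q:
  assumes "a \<ge> 1" "b \<ge> 1" "k \<ge> 1"
  shows "real (card {n \<in> {1..N}. s_max a b n \<ge> k + 2}) * (gamma a b)^(2*k) \<le> real N ^ 2 * (gamma a b)^3"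
proof -
  let ?g = "gamma a b"
  define A where "A = b * uu a b k"
  define B where "B = uu a b (Suc k)"
  obtain j where kj: "k = Suc j" using assms(3) by (cases k) auto
  have A1: "A \<ge> 1" using uu_pos[OF assms(1,2), of j] assms(2) kj by (simp add: A_def)
  have B1: "B \<ge> 1" using uu_pos[OF assms(1,2), of k] by (simp add: B_def)
  have g0: "?g > 0" using gamma_props(2)[OF assms(1,2)] by simp
  let ?S = "{n \<in> {1..N}. s_max a b n \<ge> k + 2}"
  have sub: "?S \<subseteq> (\<lambda>(x, y). A * x + B * y) ` ({1..N div A} \<times> {1..N div B})"
  proof
    fix n assume n: "n \<in> ?S"
    then obtain x y where xy: "x \<ge> 1" "y \<ge> 1" "wseq a b x y (k + 2 - 1) = n"
      using s_max_upper[OF assms(1,2), of n "k+2"] by auto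
    then have e: "n = A * x + B * y" by (simp add: wseq_uu A_def B_def algebra_simps)
    have "A * x \<le> N" using e n by auto
    then have "(A * x) div A \<le> N div A" by (rule div_le_mono)
    then have "x \<le> N div A" using A1 by simp
    moreover have "B * y \<le> N" using e n by auto
    then have "(B * y) div B \<le> N div B" by (rule div_le_mono)
    then have "y \<le> N div B" using B1 by simp
    ultimately show "n \<in> (\<lambda>(x, y). A * x + B * y) ` ({1..N div A} \<times> {1..N div B})"
      using xy e by force
  qed
  have "card ?S \<le> card ((\<lambda>(x, y). A * x + B * y) ` ({1..N div A} \<times> {1..N div B}))"
    by (rule card_mono[OF _ sub]) simp
  also have "\<dots> \<le> card ({1..N div A} \<times> {1..N div B})" by (rule card_image_le) simp
  also have "\<dots> = (N div A) * (N div B)" by (simp add: card_cartesian_product)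
  finally have c1: "real (card ?S) \<le> real (N div A) * real (N div B)"
    by (simp only: of_nat_mult[symmetric] of_nat_le_iff)
  have d1: "real (N div A) * real A \<le> real N"
  proof -
    have "(N div A) * A \<le> N" by (rule div_times_less_eq_dividend)
    then show ?thesis by (simp only: of_nat_mult[symmetric] of_nat_le_iff)
  qed
  have d2: "real (N div B) * real B \<le> real N"
  proof -
    have "(N div B) * B \<le> N" by (rule div_times_less_eq_dividend)
    then show ?thesis by (simp only: of_nat_mult[symmetric] of_nat_le_iff)
  qed
  have "real (card ?S) * (real A * real B) \<le> (real (N div A) * real (N div B)) * (real A * real B)"
    using c1 by (intro mult_right_mono) auto
  also have "\<dots> = (real (N div A) * real A) * (real (N div B) * real B)" by (simp add: algebra_simps)
  also have "\<dots> \<le> real N * real N" using d1 d2 by (intro mult_mono) auto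
  finally have c2: "real (card ?S) * (real A * real B) \<le> real N ^ 2" by (simp add: power2_eq_square)
  have u1: "?g^j \<le> ?g * real (uu a b k)" using uu_lower'[OF assms(1,2), of j] kj by simp
  have u2: "?g^k \<le> ?g * real (uu a b (Suc k))" using uu_lower'[OF assms(1,2), of k] by simp
  have "?g^j * ?g^k \<le> (?g * real (uu a b k)) * (?g * real (uu a b (Suc k)))"
    using u1 u2 g0 by (intro mult_mono) auto
  also have "\<dots> \<le> real b * ((?g * real (uu a b k)) * (?g * real (uu a b (Suc k))))"
  proof -
    have "0 \<le> (?g * real (uu a b k)) * (?g * real (uu a b (Suc k)))" using g0 by simp
    then have "1 * ((?g * real (uu a b k)) * (?g * real (uu a b (Suc k)))) \<le> real b * ((?g * real (uu a b k)) * (?g * real (uu a b (Suc k))))"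
      using assms(2) by (intro mult_right_mono) auto
    then show ?thesis by simp
  qed
  also have "\<dots> = ?g^2 * (real A * real B)" by (simp add: A_def B_def power2_eq_square algebra_simps)
  finally have "?g * (?g^j * ?g^k) \<le> ?g * (?g^2 * (real A * real B))" using g0 by simp
  moreover have "?g * (?g^j * ?g^k) = ?g^(2*k)" using kj by (simp add: power_add[symmetric] mult_2)
  moreover have "?g * (?g^2 * (real A * real B)) = ?g^3 * (real A * real B)"
    by (simp add: power2_eq_square power3_eq_cube)
  ultimately have gk: "?g^(2*k) \<le> ?g^3 * (real A * real B)" by simp
  have "real (card ?S) * ?g^(2*k) \<le> real (card ?S) * (?g^3 * (real A * real B))"
    using gk by (simp add: mult_left_mono)
  also have "\<dots> = ?g^3 * (real (card ?S) * (real A * real B))" by simp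
  also have "\<dots> \<le> ?g^3 * real N ^ 2" using c2 g0 by (simp add: mult_left_mono)
  finally show ?thesis by (simp add: mult.commute)
qed

lemma real_step:
  fixes c N G g B e e' :: real and k :: nat
  assumes "c * G^(2*k) \<le> N^2 * G^3" "e * N < B * g^(2*k+3)" "(B * g^3 * G^3 / e) * (g/G)^(2*k) \<le> e'"
    "G > 0" "e > 0" "N \<ge> 0" "g > 0"
  shows "c \<le> N * e'"
proof -
  have Gk: "G^(2*k) > 0" using assms by simp
  have "c \<le> N^2 * G^3 / G^(2*k)" using assms(1) Gk by (simp add: pos_le_divide_eq)
  also have "\<dots> = N * (N * (G^3 / G^(2*k)))" by (simp add: power2_eq_square)
  also have "\<dots> \<le> N * ((B * g^(2*k+3) / e) * (G^3 / G^(2*k)))"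
  proof -
    have "N \<le> B * g^(2*k+3) / e" using assms(2,5) by (simp add: pos_le_divide_eq mult.commute)
    then have "N * (G^3 / G^(2*k)) \<le> (B * g^(2*k+3) / e) * (G^3 / G^(2*k))"
      using assms(4) by (intro mult_right_mono) auto
    then show ?thesis using assms(6) by (intro mult_left_mono) auto
  qed
  also have "(B * g^(2*k+3) / e) * (G^3 / G^(2*k)) = (B * g^3 * G^3 / e) * (g/G)^(2*k)"
    using assms(4,5,7) by (simp add: power_add power_divide field_simps)
  also have "N * \<dots> \<le> N * e'" using assms(3,6) by (intro mult_left_mono) auto
  finally show ?thesis .
qed

lemma nat_le_ceil: "real a \<le> x \<Longrightarrow> a \<le> nat \<lceil>x\<rceil>"
  by linarith

theorem corollary5p3:
  fixes T :: "(nat \<times> nat) set" and \<alpha>' \<beta>' :: nat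
  assumes "valid T"
    and "(\<alpha>', \<beta>') \<in> T"
    and "gamma \<alpha>' \<beta>' = Gamma T"
    and "\<forall>(\<alpha>, \<beta>) \<in> T. gamma \<alpha> \<beta> = Gamma T \<longrightarrow> (\<alpha>, \<beta>) = (\<alpha>', \<beta>')"
  shows "(\<lambda>n. real (card (Eset T {(\<alpha>', \<beta>')} \<inter> {1..n})) / real n) \<longlonglongrightarrow> 1"
proof -
  define p where "p = (\<alpha>', \<beta>')"
  define g where "g = gamma \<alpha>' \<beta>'"
  define Bad where "Bad N = {n \<in> {1..N}. n \<notin> Eset T {p}}" for N
  have valT: "\<And>a b. (a, b) \<in> T \<Longrightarrow> a \<ge> 1 \<and> b \<ge> 1 \<and> coprime a b"
    using assms(1) by (auto simp: valid_def)
  have a1: "\<alpha>' \<ge> 1" "\<beta>' \<ge> 1" "coprime \<alpha>' \<beta>'" using valT[OF assms(2)] by auto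
  have g1: "g > 1" using gamma_props(2)[OF a1(1,2)] by (simp add: g_def)
  have gge: "gamma a b \<ge> g" if "(a, b) \<in> T" for a b
  proof -
    have "bdd_below ((\<lambda>(a, b). gamma a b) ` T)"
    proof (rule bdd_belowI[where m=0])
      fix x assume "x \<in> (\<lambda>(a, b). gamma a b) ` T"
      then obtain a b where "(a, b) \<in> T" "x = gamma a b" by auto
      then show "0 \<le> x" using gamma_props(2) valT by (smt (verit))
    qed
    then have "Gamma T \<le> gamma a b" unfolding Gamma_def
      using that by (metis (no_types, lifting) cInf_lower image_eqI case_prod_conv)
    then show ?thesis using assms(3) g_def by simp
  qed
  have ggt: "gamma a b > g" if "(a, b) \<in> T" "(a, b) \<noteq> p" for a b
  proof -
    have "gamma a b \<noteq> g" using assms(4) that assms(3) by (auto simp: g_def p_def)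
    then show ?thesis using gge[OF that(1)] by simp
  qed
  have badq: "\<exists>a b. (a, b) \<in> T \<and> (a, b) \<noteq> p \<and> s_max a b n \<ge> s_max \<alpha>' \<beta>' n"
    if n1: "n \<ge> 1" and nE: "n \<notin> Eset T {p}" for n
  proof (rule ccontr)
    assume H: "\<not> ?thesis"
    let ?I = "(\<lambda>(a, b). s_max a b n) ` T"
    have "?I \<subseteq> {..n+1}" using s_max_props(3)[OF _ _ n1] valT by auto
    then have finI: "finite ?I" by (rule finite_subset) simp
    have inI: "s_max \<alpha>' \<beta>' n \<in> ?I" using assms(2) by force
    have leI: "\<forall>x\<in>?I. x \<le> s_max \<alpha>' \<beta>' n"
    proof
      fix x assume "x \<in> ?I"
      then obtain a b where ab: "(a, b) \<in> T" "x = s_max a b n" by auto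
      show "x \<le> s_max \<alpha>' \<beta>' n"
      proof (cases "(a, b) = p")
        case True then show ?thesis using ab by (simp add: p_def)
      next
        case False then show ?thesis using H ab by fastforce
      qed
    qed
    have sb: "sbar T n = s_max \<alpha>' \<beta>' n" unfolding sbar_def
      using finI inI leI by (intro Max_eqI) auto
    have "Sset T n = {p}"
    proof
      show "Sset T n \<subseteq> {p}"
      proof
        fix q assume q: "q \<in> Sset T n"
        obtain a b where qab: "q = (a, b)" by fastforce
        have "(a, b) \<in> T" "s_max a b n = sbar T n" using q qab by (auto simp: Sset_def)
        then show "q \<in> {p}" using H sb qab by fastforce
      qed
      show "{p} \<subseteq> Sset T n" using assms(2) sb by (simp add: Sset_def p_def)
    qed
    then show False using nE n1 by (simp add: Eset_def)
  qed
  define F where "F = {q \<in> T. q \<noteq> p \<and> gamma (fst q) (snd q) \<le> g^3}"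
  have finF: "finite F"
  proof (rule finite_subset)
    show "F \<subseteq> {0..nat \<lceil>g^3\<rceil>} \<times> {0..nat \<lceil>(g^3)^2\<rceil>}"
    proof
      fix q assume q: "q \<in> F"
      obtain a b where qab: "q = (a, b)" by fastforce
      have ab: "(a, b) \<in> T" "gamma a b \<le> g^3" using q qab by (auto simp: F_def)
      have v: "a \<ge> 1" "b \<ge> 1" using valT[OF ab(1)] by auto
      have "real a \<le> g^3" using gamma_props(1)[OF v] ab(2) by linarith
      moreover have "real b \<le> (g^3)^2"
      proof -
        have "0 \<le> gamma a b" using gamma_props(2)[OF v] by simp
        then have "(gamma a b)^2 \<le> (g^3)^2" using ab(2) by (intro power_mono) auto
        then show ?thesis using gamma_props(4)[OF v] by linarith
      qed
      ultimately show "q \<in> {0..nat \<lceil>g^3\<rceil>} \<times> {0..nat \<lceil>(g^3)^2\<rceil>}"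
        using qab nat_le_ceil by auto
    qed
  qed simp
  have lim0: "(\<lambda>N. real (card (Bad N)) / real N) \<longlonglongrightarrow> 0"
  proof (rule LIMSEQ_I)
    fix r :: real assume r: "0 < r"
    define e where "e = r / 3"
    have e0: "e > 0" using r by (simp add: e_def)
    define cF where "cF = real (card F)"
    define e' where "e' = e / (cF + 1)"
    have e'0: "e' > 0" using e0 by (simp add: e'_def cF_def)
    define C where "C q = real \<beta>' * g^3 * (gamma (fst q) (snd q))^3 / e" for q
    have ev1: "eventually (\<lambda>k. \<forall>q\<in>F. C q * (g / gamma (fst q) (snd q))^(2*k) \<le> e') sequentially"
    proof (rule eventually_ball_finite[OF finF], rule ballI)
      fix q assume q: "q \<in> F"
      define G where "G = gamma (fst q) (snd q)"
      have Gg: "G > g" using q ggt[of "fst q" "snd q"] by (auto simp: F_def G_def)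
      have "\<bar>(g/G)^2\<bar> < 1" using Gg g1 by (simp add: power_less_one_iff abs_if divide_less_eq)
      then have "(\<lambda>k. ((g/G)^2)^k) \<longlonglongrightarrow> 0" by (intro LIMSEQ_power_zero) simp
      then have "(\<lambda>k. C q * ((g/G)^2)^k) \<longlonglongrightarrow> 0" by (rule tendsto_mult_right_zero)
      then have "eventually (\<lambda>k. C q * ((g/G)^2)^k < e') sequentially"
        using e'0 by (rule order_tendstoD(2))
      then show "eventually (\<lambda>k. C q * (g / gamma (fst q) (snd q))^(2*k) \<le> e') sequentially"
        by (rule eventually_mono) (simp add: G_def power_mult)
    qed
    then obtain k1 where k1: "\<And>k. k \<ge> k1 \<Longrightarrow> \<forall>q\<in>F. C q * (g / gamma (fst q) (snd q))^(2*k) \<le> e'"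
      by (auto simp: eventually_sequentially)
    obtain j2 where j2: "real \<beta>' * g^5 / e < g^j2" using real_arch_pow[OF g1] by blast
    have j2m: "real \<beta>' * g^5 < e * g^j" if "j \<ge> j2" for j
    proof -
      have "g^j2 \<le> g^j" using that g1 by (intro power_increasing) auto
      then have "real \<beta>' * g^5 / e < g^j" using j2 by linarith
      then show ?thesis using e0 by (simp add: pos_divide_less_eq mult.commute)
    qed
    define k0 where "k0 = max k1 (Suc j2)"
    define N0 where "N0 = nat \<lceil>real \<beta>' * g^(2*k0+1) / e\<rceil> + 1"
    show "\<exists>no. \<forall>N\<ge>no. norm (real (card (Bad N)) / real N - 0) < r"
    proof (intro exI allI impI)
      fix N assume N: "N0 \<le> N"
      have N1: "N \<ge> 1" using N by (simp add: N0_def)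
      have "real \<beta>' * g^(2*k0+1) / e \<le> real N" using N unfolding N0_def by linarith
      then have eN: "real \<beta>' * g^(2*k0+1) \<le> e * real N" using e0 by (simp add: pos_divide_le_eq mult.commute)
      define P where "P k = (e * real N < real \<beta>' * g^(2*k+3))" for k
      have exP: "\<exists>k. P k"
      proof -
        obtain m where m: "e * real N / real \<beta>' < g^m" using real_arch_pow[OF g1] by blast
        have "g^m \<le> g^(2*m+3)" using g1 by (intro power_increasing) auto
        then have "e * real N / real \<beta>' < g^(2*m+3)" using m by linarith
        then have "P m" using a1(2) by (simp add: P_def pos_divide_less_eq mult.commute)
        then show ?thesis by blast
      qed
      define k where "k = (LEAST k. P k)"
      have Pk: "P k" unfolding k_def using exP by (rule LeastI_ex)
      have kk0: "k \<ge> k0"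
      proof (rule ccontr)
        assume "\<not> k \<ge> k0"
        then have "2*k+3 \<le> 2*k0+1" by simp
        then have "g^(2*k+3) \<le> g^(2*k0+1)" using g1 by (intro power_increasing) auto
        then have "real \<beta>' * g^(2*k+3) \<le> real \<beta>' * g^(2*k0+1)" by (simp add: mult_left_mono)
        then show False using Pk eN by (simp add: P_def)
      qed
      then obtain m where km: "k = Suc m" by (cases k) (auto simp: k0_def)
      have k1': "k \<ge> 1" using km by simp
      have "\<not> P m" unfolding k_def using km k_def not_less_Least[of m P] by simp
      moreover have "2*k+1 = 2*m+3" using km by simp
      ultimately have lowk: "real \<beta>' * g^(2*k+1) \<le> e * real N"
        unfolding P_def by (metis not_less)
      have mj2: "m \<ge> j2" using kk0 km by (simp add: k0_def)
      have cover: "Bad N \<subseteq> {n \<in> {1..N}. real n \<le> real \<beta>' * g^(2*k+1)} \<union>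
          (\<Union>q\<in>F. {n \<in> {1..N}. s_max (fst q) (snd q) n \<ge> k+2})"
      proof
        fix n assume n: "n \<in> Bad N"
        then have n1: "n \<ge> 1" and nN: "n \<le> N" and nE: "n \<notin> Eset T {p}" by (auto simp: Bad_def)
        show "n \<in> {n \<in> {1..N}. real n \<le> real \<beta>' * g^(2*k+1)} \<union>
          (\<Union>q\<in>F. {n \<in> {1..N}. s_max (fst q) (snd q) n \<ge> k+2})"
        proof (cases "real n \<le> real \<beta>' * g^(2*k+1)")
          case True then show ?thesis using n1 nN by auto
        next
          case False
          then have sp: "s_max \<alpha>' \<beta>' n \<ge> k+2" using lower_p[OF a1 k1'] by (simp add: g_def)
          obtain a b where ab: "(a, b) \<in> T" "(a, b) \<noteq> p" "s_max a b n \<ge> s_max \<alpha>' \<beta>' n"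
            using badq[OF n1 nE] by blast
          have v: "a \<ge> 1" "b \<ge> 1" using valT[OF ab(1)] by auto
          have sq: "s_max a b n \<ge> k+2" using ab(3) sp by simp
          have "(a, b) \<in> F"
          proof (rule ccontr)
            assume "(a, b) \<notin> F"
            then have Gb: "gamma a b > g^3" using ab by (auto simp: F_def)
            define G where "G = gamma a b"
            have G0: "G > 0" using gamma_props(2)[OF v] by (simp add: G_def)
            have "G^k \<le> G * real n" using det_q[OF v n1 sq] by (simp add: G_def)
            then have "G * G^m \<le> G * real n" using km by simp
            then have Gm: "G^m \<le> real n" using G0 by simp
            have "(g^3)^m \<le> G^m" using Gb g1 by (intro power_mono) (auto simp: G_def)
            then have "g^(3*m) \<le> real n" using Gm by (simp add: power_mult)
            also have "\<dots> \<le> real N" using nN by simp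
            finally have "e * g^(3*m) \<le> e * real N" using e0 by (simp add: mult_left_mono)
            also have "\<dots> < real \<beta>' * g^(2*k+3)" using Pk by (simp add: P_def)
            also have "\<dots> = real \<beta>' * g^5 * g^(2*m)" using km by (simp add: power_add[symmetric])
            finally have "(e * g^m) * g^(2*m) < (real \<beta>' * g^5) * g^(2*m)"
              by (simp add: power_add[symmetric] mult.assoc mult.commute mult.left_commute)
            then have "e * g^m < real \<beta>' * g^5" using g1 by simp
            then show False using j2m[OF mj2] by simp
          qed
          then show ?thesis using sq n1 nN by force
        qed
      qed
      have card1: "real (card {n \<in> {1..N}. real n \<le> real \<beta>' * g^(2*k+1)}) \<le> e * real N"
      proof -
        let ?x = "real \<beta>' * g^(2*k+1)"
        have x0: "?x \<ge> 0" using g1 by simp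
        have "{n \<in> {1..N}. real n \<le> ?x} \<subseteq> {1..nat \<lfloor>?x\<rfloor>}" by (auto simp: le_nat_floor)
        then have "card {n \<in> {1..N}. real n \<le> ?x} \<le> nat \<lfloor>?x\<rfloor>"
          by (metis card_atLeastAtMost card_mono diff_Suc_1 finite_atLeastAtMost)
        then have "real (card {n \<in> {1..N}. real n \<le> ?x}) \<le> real (nat \<lfloor>?x\<rfloor>)" by simp
        also have "\<dots> \<le> ?x" using x0 by linarith
        finally show ?thesis using lowk by linarith
      qed
      have card2: "real (card {n \<in> {1..N}. s_max (fst q) (snd q) n \<ge> k+2}) \<le> real N * e'"
        if q: "q \<in> F" for q
      proof -
        define G where "G = gamma (fst q) (snd q)"
        have v: "fst q \<ge> 1" "snd q \<ge> 1" using q valT[of "fst q" "snd q"] by (auto simp: F_def)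
        have G0: "G > 0" using gamma_props(2)[OF v] by (simp add: G_def)
        have c: "real (card {n \<in> {1..N}. s_max (fst q) (snd q) n \<ge> k+2}) * G^(2*k) \<le> real N ^ 2 * G^3"
          using count_q[OF v k1'] by (simp add: G_def)
        have Ck: "C q * (g / G)^(2*k) \<le> e'" using k1[of k] kk0 q by (simp add: k0_def G_def)
        show ?thesis
          by (rule real_step[OF c _ _ G0 e0]) (use Pk Ck g1 in \<open>auto simp: P_def C_def G_def\<close>)
      qed
      have finU: "finite (\<Union>q\<in>F. {n \<in> {1..N}. s_max (fst q) (snd q) n \<ge> k+2})"
        by (rule finite_subset[of _ "{1..N}"]) auto
      have "card (Bad N) \<le> card ({n \<in> {1..N}. real n \<le> real \<beta>' * g^(2*k+1)} \<union>
          (\<Union>q\<in>F. {n \<in> {1..N}. s_max (fst q) (snd q) n \<ge> k+2}))"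
        by (rule card_mono[OF _ cover]) (use finU in auto)
      also have "\<dots> \<le> card {n \<in> {1..N}. real n \<le> real \<beta>' * g^(2*k+1)} +
          card (\<Union>q\<in>F. {n \<in> {1..N}. s_max (fst q) (snd q) n \<ge> k+2})" by (rule card_Un_le)
      also have "card (\<Union>q\<in>F. {n \<in> {1..N}. s_max (fst q) (snd q) n \<ge> k+2}) \<le>
          (\<Sum>q\<in>F. card {n \<in> {1..N}. s_max (fst q) (snd q) n \<ge> k+2})" by (rule card_UN_le[OF finF])
      finally have "card (Bad N) \<le> card {n \<in> {1..N}. real n \<le> real \<beta>' * g^(2*k+1)} +
          (\<Sum>q\<in>F. card {n \<in> {1..N}. s_max (fst q) (snd q) n \<ge> k+2})" by simp
      then have "real (card (Bad N)) \<le> real (card {n \<in> {1..N}. real n \<le> real \<beta>' * g^(2*k+1)} +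
          (\<Sum>q\<in>F. card {n \<in> {1..N}. s_max (fst q) (snd q) n \<ge> k+2}))" by (simp only: of_nat_le_iff)
      then have "real (card (Bad N)) \<le> real (card {n \<in> {1..N}. real n \<le> real \<beta>' * g^(2*k+1)}) +
          (\<Sum>q\<in>F. real (card {n \<in> {1..N}. s_max (fst q) (snd q) n \<ge> k+2}))" by (simp only: of_nat_add of_nat_sum)
      also have "\<dots> \<le> e * real N + (\<Sum>q\<in>F. real N * e')"
        using card1 card2 by (intro add_mono sum_mono) auto
      also have "(\<Sum>q\<in>F. real N * e') = real N * (cF * e')" by (simp add: cF_def)
      also have "cF * e' \<le> e" using e0 by (simp add: e'_def field_simps cF_def)
      then have "real N * (cF * e') \<le> real N * e" by (simp add: mult_left_mono)
      finally have "real (card (Bad N)) \<le> 2 * e * real N" by simp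
      then have "real (card (Bad N)) / real N \<le> 2 * e" using N1 by (simp add: divide_le_eq mult.commute)
      moreover have "2 * e < r" using r by (simp add: e_def)
      moreover have "0 \<le> real (card (Bad N)) / real N" by simp
      ultimately show "norm (real (card (Bad N)) / real N - 0) < r" by simp
    qed
  qed
  have eq: "real (card (Eset T {p} \<inter> {1..N})) / real N = 1 - real (card (Bad N)) / real N"
    if N1: "N \<ge> 1" for N
  proof -
    have "Eset T {p} \<inter> {1..N} = {1..N} - Bad N" by (auto simp: Bad_def)
    moreover have sub: "Bad N \<subseteq> {1..N}" by (auto simp: Bad_def)
    ultimately have "card (Eset T {p} \<inter> {1..N}) = N - card (Bad N)"
      by (simp add: card_Diff_subset finite_subset)
    moreover have "card (Bad N) \<le> N" using card_mono[OF _ sub] by simp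
    ultimately have "real (card (Eset T {p} \<inter> {1..N})) = real N - real (card (Bad N))" by simp
    then show ?thesis using N1 by (simp add: diff_divide_distrib)
  qed
  have "(\<lambda>N. 1 - real (card (Bad N)) / real N) \<longlonglongrightarrow> 1 - 0"
    by (intro tendsto_diff tendsto_const lim0)
  then have "(\<lambda>N. 1 - real (card (Bad N)) / real N) \<longlonglongrightarrow> 1" by simp
  moreover have "eventually (\<lambda>N. 1 - real (card (Bad N)) / real N =
      real (card (Eset T {p} \<inter> {1..N})) / real N) sequentially"
    using eq by (auto simp: eventually_sequentially intro!: exI[of _ 1])
  ultimately show ?thesis unfolding p_def by (rule Lim_transform_eventually)
qed

end
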